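(* Let $F\in\mathbb{R}[x_1,\dots,x_n]$ be a form that is indefinite on $\mathbb{T}_n=\{(x_1,\dots,x_n): x_i\ge0,\ \sum_i x_i=1\}$, i.e., there exist $X,Y\in\mathbb{T}_n$ with $F(X)>0$ and $F(Y)<0$. Then the sequence of sets $\{\mathrm{SDS}^{(m)}(F)\}_{m\ge1}$ is negatively terminating, i.e., there exist a positive integer $k$ and a form $G\in\mathrm{SDS}^{(k)}(F)$ with $G(1,1,\dots,1)<0$.
   Context: $W_n$ is the $n\times n$ matrix with $(W_n)_{ij}=1/j$ for $i\le j$ and $0$ for $i>j$. For a permutation $[k_1\cdots k_n]$ of $1,\dots,n$, $P_{[k_1\cdots k_n]}$ is the permutation matrix with $1$ in positions $(i,k_i)$ and $0$ elsewhere, and $B_{[k_1\cdots k_n]}=P_{[k_1\cdots k_n]}W_n$; $PW_n$ denotes the set of these $n!$ matrices. For $m\ge1$, $\mathrm{SDS}^{(m)}(F)$ is the set of forms $F(B_{[\alpha_1]}B_{[\alpha_2]}\cdots B_{[\alpha_m]}X^{\mathrm{Tr}})$, $X=(x_1,\dots,x_n)$, as $B_{[\alpha_1]},\dots,B_{[\alpha_m]}$ range independently over $PW_n$. *)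

theory Defs
  imports Complex_Main "HOL-Combinatorics.Permutations"
begin

(* Vectors in R^n are represented as functions nat => real, coordinates 0..n-1
   (index i here corresponds to index i+1 in the paper). *)

definition W :: "nat \<Rightarrow> nat \<Rightarrow> real" where
  "W i j = (if i \<le> j then 1 / real (j + 1) else 0)"

(* B_[k] = P_[k] W_n, with (P_[k])_{i,k_i} = 1, so (B_[k])_{ij} = (W_n)_{k_i, j};
   here the permutation is p :: nat => nat permuting {..<n}. Result: B_[p] x. *)
definition Bmul :: "nat \<Rightarrow> (nat \<Rightarrow> nat) \<Rightarrow> (nat \<Rightarrow> real) \<Rightarrow> (nat \<Rightarrow> real)" where
  "Bmul n p x = (\<lambda>i. if i < n then (\<Sum>j<n. W (p i) j * x j) else 0)"

definition sds_apply :: "nat \<Rightarrow> (nat \<Rightarrow> nat) list \<Rightarrow> (nat \<Rightarrow> real) \<Rightarrow> (nat \<Rightarrow> real)" where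
  "sds_apply n ps x = foldr (Bmul n) ps x"

definition is_form :: "nat \<Rightarrow> nat \<Rightarrow> ((nat \<Rightarrow> real) \<Rightarrow> real) \<Rightarrow> bool" where
  "is_form n d F \<longleftrightarrow> (\<exists>(S :: (nat \<Rightarrow> nat) set) (c :: (nat \<Rightarrow> nat) \<Rightarrow> real).
      finite S \<and> (\<forall>\<alpha>\<in>S. (\<forall>i\<ge>n. \<alpha> i = 0) \<and> (\<Sum>i<n. \<alpha> i) = d) \<and>
      (\<forall>x. F x = (\<Sum>\<alpha>\<in>S. c \<alpha> * (\<Prod>i<n. x i ^ \<alpha> i))))"

definition simplex :: "nat \<Rightarrow> (nat \<Rightarrow> real) set" where
  "simplex n = {x. (\<forall>i<n. 0 \<le> x i) \<and> (\<Sum>i<n. x i) = 1 \<and> (\<forall>i\<ge>n. x i = 0)}"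

definition SDS :: "nat \<Rightarrow> nat \<Rightarrow> ((nat \<Rightarrow> real) \<Rightarrow> real) \<Rightarrow> ((nat \<Rightarrow> real) \<Rightarrow> real) set" where
  "SDS n m F = {G. \<exists>ps. length ps = m \<and> (\<forall>p\<in>set ps. p permutes {..<n}) \<and>
                       G = (\<lambda>x. F (sds_apply n ps x))}"

end

theory Submission
  imports Defs
begin

lemma colsum_W: "j < n \<Longrightarrow> (\<Sum>k<n. W k j) = 1"
proof -
  assume j: "j < n"
  have "(\<Sum>k<n. W k j) = (\<Sum>k\<in>{..j}. 1 / real (j+1))"
    unfolding W_def by (rule sum.mono_neutral_cong_right) (use j in auto)
  thus ?thesis by simp
qed

lemma sum_perm: "p permutes {..<n} \<Longrightarrow> (\<Sum>i<n. g (p i)) = (\<Sum>k<n. (g k::real))"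
  using sum.reindex_bij_betw[OF permutes_imp_bij] by blast

lemma Bmul_sum:
  assumes "p permutes {..<n}"
  shows "(\<Sum>i<n. Bmul n p x i) = (\<Sum>j<n. x j)"
proof -
  have "(\<Sum>i<n. Bmul n p x i) = (\<Sum>i<n. (\<lambda>k. \<Sum>j<n. W k j * x j) (p i))"
    by (simp add: Bmul_def)
  also have "\<dots> = (\<Sum>k<n. \<Sum>j<n. W k j * x j)" using sum_perm[OF assms, where g="\<lambda>k. \<Sum>j<n. W k j * x j"] by simp
  also have "\<dots> = (\<Sum>j<n. (\<Sum>k<n. W k j) * x j)"
    by (subst sum.swap) (simp add: sum_distrib_right)
  also have "\<dots> = (\<Sum>j<n. x j)" by (simp add: colsum_W)
  finally show ?thesis .
qed

lemma Bmul_contract: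
  assumes "p permutes {..<n}" and "(\<Sum>j<n. u j) = (\<Sum>j<n. v j)"
  shows "(\<Sum>i<n. \<bar>Bmul n p u i - Bmul n p v i\<bar>) \<le> (1 - 1 / real n) * (\<Sum>j<n. \<bar>u j - v j\<bar>)"
proof -
  define e where "e (j::nat) = u j - v j" for j
  define m where "m (k::nat) = (if k = 0 then 1 / real n else 0)" for k
  have e0: "(\<Sum>j<n. e j) = 0" using assms(2) by (simp add: e_def sum_subtractf)
  have "(\<Sum>i<n. \<bar>Bmul n p u i - Bmul n p v i\<bar>) = (\<Sum>i<n. (\<lambda>k. \<bar>\<Sum>j<n. W k j * e j\<bar>) (p i))"
    by (simp add: Bmul_def e_def sum_subtractf right_diff_distrib)
  also have "\<dots> = (\<Sum>k<n. \<bar>\<Sum>j<n. W k j * e j\<bar>)" using sum_perm[OF assms(1), where g="\<lambda>k. \<bar>\<Sum>j<n. W k j * e j\<bar>"] by simp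
  also have "\<dots> \<le> (\<Sum>k<n. \<Sum>j<n. (W k j - m k) * \<bar>e j\<bar>)"
  proof (rule sum_mono)
    fix k assume k: "k \<in> {..<n}"
    have "(\<Sum>j<n. W k j * e j) = (\<Sum>j<n. (W k j - m k) * e j)"
      using e0 by (simp add: left_diff_distrib sum_subtractf sum_distrib_left[symmetric])
    also have "\<bar>\<dots>\<bar> \<le> (\<Sum>j<n. \<bar>(W k j - m k) * e j\<bar>)" by (rule sum_abs)
    also have "\<dots> = (\<Sum>j<n. (W k j - m k) * \<bar>e j\<bar>)"
    proof (rule sum.cong)
      fix j assume j: "j \<in> {..<n}"
      have "W k j \<ge> m k"
      proof (cases "k = 0")
        case True
        then show ?thesis using j by (simp add: W_def m_def frac_le)
      next
        case False
        then show ?thesis by (simp add: W_def m_def)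
      qed
      then show "\<bar>(W k j - m k) * e j\<bar> = (W k j - m k) * \<bar>e j\<bar>" by (simp add: abs_mult)
    qed simp
    finally show "\<bar>\<Sum>j<n. W k j * e j\<bar> \<le> (\<Sum>j<n. (W k j - m k) * \<bar>e j\<bar>)" .
  qed
  also have "\<dots> = (\<Sum>j<n. ((\<Sum>k<n. W k j) - (\<Sum>k<n. m k)) * \<bar>e j\<bar>)"
    by (subst sum.swap) (simp add: sum_distrib_right sum_subtractf left_diff_distrib)
  also have "\<dots> = (\<Sum>j<n. (1 - 1 / real n) * \<bar>e j\<bar>)"
  proof (rule sum.cong)
    fix j assume j: "j \<in> {..<n}"
    have "(\<Sum>k<n. m k) = 1 / real n"
      using j by (simp add: m_def sum.delta)
    then show "((\<Sum>k<n. W k j) - (\<Sum>k<n. m k)) * \<bar>e j\<bar> = (1 - 1 / real n) * \<bar>e j\<bar>"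
      using j by (simp add: colsum_W)
  qed simp
  finally show ?thesis by (simp add: e_def sum_distrib_left)
qed

lemma sds_sum:
  "\<forall>p\<in>set ps. p permutes {..<n} \<Longrightarrow> (\<Sum>i<n. sds_apply n ps x i) = (\<Sum>j<n. x j)"
  by (induction ps) (auto simp: sds_apply_def Bmul_sum)

lemma sds_contract:
  assumes "\<forall>p\<in>set ps. p permutes {..<n}" and "(\<Sum>j<n. u j) = (\<Sum>j<n. v j)" and "n > 0"
  shows "(\<Sum>i<n. \<bar>sds_apply n ps u i - sds_apply n ps v i\<bar>)
           \<le> (1 - 1 / real n) ^ length ps * (\<Sum>j<n. \<bar>u j - v j\<bar>)"
  using assms(1)
proof (induction ps)
  case Nil
  then show ?case by (simp add: sds_apply_def)
next
  case (Cons p ps)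
  have r: "0 \<le> 1 - 1 / real n" using assms(3) by simp
  have "(\<Sum>i<n. \<bar>sds_apply n (p#ps) u i - sds_apply n (p#ps) v i\<bar>)
     = (\<Sum>i<n. \<bar>Bmul n p (sds_apply n ps u) i - Bmul n p (sds_apply n ps v) i\<bar>)"
    by (simp add: sds_apply_def)
  also have "\<dots> \<le> (1 - 1 / real n) * (\<Sum>j<n. \<bar>sds_apply n ps u j - sds_apply n ps v j\<bar>)"
    using Cons.prems assms(2) by (intro Bmul_contract) (auto simp: sds_sum)
  also have "\<dots> \<le> (1 - 1 / real n) * ((1 - 1 / real n) ^ length ps * (\<Sum>j<n. \<bar>u j - v j\<bar>))"
    using Cons by (intro mult_left_mono r) auto
  finally show ?case by (simp add: mult.assoc)
qed

lemma Bmul_scale: "Bmul n p (\<lambda>i. a * x i) = (\<lambda>i. a * Bmul n p x i)"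
  by (auto simp: Bmul_def sum_distrib_left algebra_simps)

lemma sds_scale: "sds_apply n ps (\<lambda>i. a * x i) = (\<lambda>i. a * sds_apply n ps x i)"
  by (induction ps) (simp_all add: sds_apply_def Bmul_scale)

lemma form_homog:
  assumes "is_form n d F"
  shows "F (\<lambda>i. a * x i) = a ^ d * F x"
proof -
  obtain S c where S: "finite S" "\<forall>\<alpha>\<in>S. (\<forall>i\<ge>n. \<alpha> i = 0) \<and> (\<Sum>i<n. \<alpha> i) = d"
    and F: "\<forall>x. F x = (\<Sum>\<alpha>\<in>S. c \<alpha> * (\<Prod>i<n. x i ^ \<alpha> i))"
    using assms unfolding is_form_def by blast
  have "F (\<lambda>i. a * x i) = (\<Sum>\<alpha>\<in>S. c \<alpha> * (a ^ (\<Sum>i<n. \<alpha> i) * (\<Prod>i<n. x i ^ \<alpha> i)))"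
    by (simp add: F power_mult_distrib prod.distrib power_sum)
  also have "\<dots> = (\<Sum>\<alpha>\<in>S. a ^ d * (c \<alpha> * (\<Prod>i<n. x i ^ \<alpha> i)))"
    using S(2) by (intro sum.cong) auto
  also have "\<dots> = a ^ d * F x" by (simp add: F sum_distrib_left)
  finally show ?thesis .
qed

lemma preimage:
  assumes z: "z \<in> simplex n"
  shows "\<exists>q x. q permutes {..<n} \<and> x \<in> simplex n \<and> Bmul n q x = z"
proof -
  define xs where "xs = map z [0..<n]"
  define ys where "ys = rev (sort xs)"
  have "mset ys = mset xs" by (simp add: ys_def)
  then obtain p where p: "p permutes {..<length xs}" "permute_list p xs = ys"
    using mset_eq_permutation by metis
  have lx: "length xs = n" "length ys = n" by (simp_all add: xs_def ys_def)
  have pn: "p permutes {..<n}" using p lx by simp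
  have ysn: "ys ! k = z (p k)" if "k < n" for k
    using permute_list_nth[of p xs k] p lx that permutes_in_image[OF pn, of k]
    by (simp add: xs_def)
  have zpos: "\<And>i. i < n \<Longrightarrow> 0 \<le> z i" and zsum: "(\<Sum>i<n. z i) = 1"
    and zout: "\<And>i. i \<ge> n \<Longrightarrow> z i = 0"
    using z by (auto simp: simplex_def)
  define y where "y k = (if k < n then z (p k) else 0)" for k
  have ymono: "y k' \<le> y k" if "k \<le> k'" for k k'
  proof (cases "k' < n")
    case True
    then have "y k' = ys ! k'" "y k = ys ! k" using that by (simp_all add: y_def ysn)
    moreover have "ys ! k' \<le> ys ! k"
      unfolding ys_def using that True lx
      by (simp add: rev_nth xs_def sorted_nth_mono)
    ultimately show ?thesis by simp
  next
    case False
    then show ?thesis using zpos permutes_in_image[OF pn, of k] by (simp add: y_def)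
  qed
  define x where "x j = (if j < n then real (j+1) * (y j - y (Suc j)) else 0)" for j
  have Wx: "(\<Sum>j<n. W k j * x j) = y k" if k: "k < n" for k
  proof -
    have "(\<Sum>j<n. W k j * x j) = (\<Sum>j\<in>{k..<n}. y j - y (Suc j))"
      by (rule sum.mono_neutral_cong_right) (auto simp: W_def x_def)
    also have "\<dots> = - (\<Sum>j\<in>{k..<n}. y (Suc j) - y j)"
      by (simp add: sum_negf[symmetric])
    also have "\<dots> = - (y n - y k)" using k by (subst sum_Suc_diff') simp_all
    also have "\<dots> = y k" by (simp add: y_def)
    finally show ?thesis .
  qed
  define q where "q = inv p"
  have qn: "q permutes {..<n}" using pn by (simp add: q_def permutes_inv)
  have Bz: "Bmul n q x = z"
  proof
    fix i show "Bmul n q x i = z i"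
    proof (cases "i < n")
      case True
      then have "q i < n" using permutes_in_image[OF qn] by simp
      then show ?thesis using True Wx
        by (simp add: Bmul_def y_def q_def permutes_inverses(1)[OF pn])
    qed (simp add: Bmul_def zout)
  qed
  have "x \<in> simplex n"
  proof -
    have "\<forall>i<n. 0 \<le> x i" using ymono by (simp add: x_def)
    moreover have "(\<Sum>i<n. x i) = 1" using Bmul_sum[OF qn, of x] Bz zsum by simp
    moreover have "\<forall>i\<ge>n. x i = 0" by (simp add: x_def)
    ultimately show ?thesis by (simp add: simplex_def)
  qed
  with qn Bz show ?thesis by blast
qed

lemma preimage_iter:
  assumes "z \<in> simplex n"
  shows "\<exists>ps v. length ps = m \<and> (\<forall>p\<in>set ps. p permutes {..<n}) \<and> v \<in> simplex n
             \<and> sds_apply n ps v = z"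
proof (induction m)
  case 0
  then show ?case using assms by (auto simp: sds_apply_def)
next
  case (Suc m)
  then obtain ps v where ps: "length ps = m" "\<forall>p\<in>set ps. p permutes {..<n}" "v \<in> simplex n"
    "sds_apply n ps v = z" by blast
  obtain q x where "q permutes {..<n}" "x \<in> simplex n" "Bmul n q x = v"
    using preimage[OF ps(3)] by blast
  then show ?case using ps
    by (intro exI[of _ "ps @ [q]"] exI[of _ x]) (auto simp: sds_apply_def)
qed

theorem theorem5p1:
  fixes n d :: nat and F :: "(nat \<Rightarrow> real) \<Rightarrow> real"
  assumes "is_form n d F"
    and "\<exists>X\<in>simplex n. F X > 0"
    and "\<exists>Y\<in>simplex n. F Y < 0"
  shows "\<exists>k>0. \<exists>G\<in>SDS n k F. G (\<lambda>_. 1) < 0"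
proof -
  obtain Y where Y: "Y \<in> simplex n" "F Y < 0" using assms(3) by blast
  have n0: "n > 0"
  proof (rule ccontr)
    assume "\<not> n > 0" then have "n = 0" by simp
    then show False using Y(1) by (simp add: simplex_def)
  qed
  obtain S c where S: "finite S"
    and F: "\<forall>x. F x = (\<Sum>\<alpha>\<in>S. c \<alpha> * (\<Prod>i<n. x i ^ \<alpha> i))"
    using assms(1) unfolding is_form_def by blast
  have "\<forall>m. \<exists>ps v. length ps = m \<and> (\<forall>p\<in>set ps. p permutes {..<n}) \<and> v \<in> simplex n
             \<and> sds_apply n ps v = Y"
    using preimage_iter[OF Y(1)] by blast
  then obtain PS V where PV: "\<And>m. length (PS m) = m" "\<And>m. \<forall>p\<in>set (PS m). p permutes {..<n}"
    "\<And>m. V m \<in> simplex n" "\<And>m. sds_apply n (PS m) (V m) = Y"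
    by metis
  define c0 where "c0 = (\<lambda>_::nat. 1 / real n)"
  have c0s: "(\<Sum>j<n. c0 j) = 1" using n0 by (simp add: c0_def)
  define a where "a m = sds_apply n (PS m) c0" for m
  define r where "r = 1 - 1 / real n"
  have r: "0 \<le> r" "r < 1" using n0 by (auto simp: r_def)
  have bound: "\<bar>a m i - Y i\<bar> \<le> r ^ m * 2" if i: "i < n" for m i
  proof -
    have Vs: "(\<Sum>j<n. V m j) = 1" "\<forall>j<n. 0 \<le> V m j" using PV(3)[of m] by (auto simp: simplex_def)
    have "\<bar>a m i - Y i\<bar> \<le> (\<Sum>i<n. \<bar>a m i - Y i\<bar>)"
      using i by (intro member_le_sum) auto
    also have "\<dots> = (\<Sum>i<n. \<bar>sds_apply n (PS m) c0 i - sds_apply n (PS m) (V m) i\<bar>)"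
      by (simp add: a_def PV(4))
    also have "\<dots> \<le> r ^ m * (\<Sum>j<n. \<bar>c0 j - V m j\<bar>)"
      using sds_contract[OF PV(2)[of m] _ n0, of c0 "V m"] c0s Vs PV(1)[of m] by (simp add: r_def)
    also have "\<dots> \<le> r ^ m * 2"
    proof (rule mult_left_mono)
      have "(\<Sum>j<n. \<bar>c0 j - V m j\<bar>) \<le> (\<Sum>j<n. c0 j + V m j)"
        proof (intro sum_mono)
        fix j assume "j \<in> {..<n}"
        then have "0 \<le> V m j" "0 \<le> c0 j" using Vs by (auto simp: c0_def)
        then show "\<bar>c0 j - V m j\<bar> \<le> c0 j + V m j" by linarith
      qed
      also have "\<dots> = 2" using Vs c0s by (simp add: sum.distrib)
      finally show "(\<Sum>j<n. \<bar>c0 j - V m j\<bar>) \<le> 2" .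
    qed (use r in simp)
    finally show ?thesis .
  qed
  have lim: "(\<lambda>m. a m i) \<longlonglongrightarrow> Y i" if i: "i < n" for i
  proof (rule LIM_zero_cancel, rule tendsto_sandwich[where f="\<lambda>m. - (r ^ m * 2)" and h="\<lambda>m. r ^ m * 2"])
    have "(\<lambda>m. r ^ m * 2) \<longlonglongrightarrow> 0 * 2"
      using LIMSEQ_power_zero[of r] r by (intro tendsto_mult) auto
    then show "(\<lambda>m. r ^ m * 2) \<longlonglongrightarrow> 0" by simp
    then show "(\<lambda>m. - (r ^ m * 2)) \<longlonglongrightarrow> 0" using tendsto_minus by fastforce
    show "\<forall>\<^sub>F m in sequentially. - (r ^ m * 2) \<le> a m i - Y i"
      using bound[OF i] by (intro always_eventually allI) (smt (verit))
    show "\<forall>\<^sub>F m in sequentially. a m i - Y i \<le> r ^ m * 2"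
      using bound[OF i] by (intro always_eventually allI) (smt (verit))
  qed
  have Feq: "F = (\<lambda>x. \<Sum>\<alpha>\<in>S. c \<alpha> * (\<Prod>i<n. x i ^ \<alpha> i))" using F by auto
  have "(\<lambda>m. F (a m)) \<longlonglongrightarrow> F Y"
    unfolding Feq by (intro tendsto_sum tendsto_mult tendsto_const tendsto_prod tendsto_power lim) auto
  then have "\<forall>\<^sub>F m in sequentially. F (a m) < 0" using Y(2) by (rule order_tendstoD)
  moreover have "\<forall>\<^sub>F m in sequentially. m \<ge> 1" by (rule eventually_ge_at_top)
  ultimately obtain m where m: "F (a m) < 0" "m \<ge> 1"
    by (metis (mono_tags, lifting) eventually_sequentially order.refl eventually_conj_iff)
  define G where "G = (\<lambda>x. F (sds_apply n (PS m) x))"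
  have "G \<in> SDS n m F" using PV(1,2) by (auto simp: SDS_def G_def)
  moreover have "G (\<lambda>_. 1) < 0"
  proof -
    have one: "(\<lambda>_::nat. 1::real) = (\<lambda>i. real n * c0 i)" using n0 by (simp add: c0_def)
    have "G (\<lambda>_. 1) = real n ^ d * F (a m)"
      unfolding G_def one sds_scale a_def by (rule form_homog[OF assms(1)])
    also have "\<dots> < 0" using m n0 by (simp add: mult_pos_neg)
    finally show ?thesis .
  qed
  ultimately show ?thesis using m(2) by (intro exI[of _ m] conjI bexI[of _ G]) auto
qed

end
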